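(* For $k\in\mathbb Z$ and $a\in\mathbb Z_{\ge0}$ let ${\boldsymbol{\mathsf X}}_k(a)={\boldsymbol{\mathsf x}}_{k+1}(a)+{\boldsymbol{\mathsf y}}_k(a)$. Then for every two-rowed array ${\boldsymbol{\mathsf X}}$ (as in the context): (1) $\mathcal F({\boldsymbol{\mathsf X}}_k(2a))={\boldsymbol{\mathsf X}}_{k+2}(2a)$; (2) $\mathcal F({\boldsymbol{\mathsf X}}+{\boldsymbol{\mathsf X}}_k(2a))=\mathcal F({\boldsymbol{\mathsf X}})+{\boldsymbol{\mathsf X}}_{k+2}(2a)$; (3) $\tilde f({\boldsymbol{\mathsf X}}+{\boldsymbol{\mathsf X}}_k(2a))=\tilde f({\boldsymbol{\mathsf X}})+{\boldsymbol{\mathsf X}}_k(2a)$ (with the convention $0+{\boldsymbol{\mathsf Y}}=0$).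
   Context: A two-rowed array is a family ${\boldsymbol{\mathsf X}}=({\sf x}_k;{\sf y}_k)_{k\in\mathbb Z}$ of non-negative integers with ${\sf x}_k={\sf y}_k=0$ for all but finitely many $k$; sums and differences are componentwise. ${\boldsymbol{\mathsf x}}_k(a)$ (resp. ${\boldsymbol{\mathsf y}}_k(a)$) is the array with ${\sf x}_k=a$ (resp. ${\sf y}_k=a$) and all other entries $0$. For $z\in\mathbb Z_{\ge0}$ write $z=2\,\mathrm{quo}(z)+\mathrm{rem}(z)$ with $\mathrm{rem}(z)\in\{0,1\}$. The map $\mathcal F$: given ${\boldsymbol{\mathsf X}}=({\sf x}_k;{\sf y}_k)$, put for all $k\in\mathbb Z$: ${\sf y}'_k=\mathrm{rem}({\sf y}_k)+2\,\mathrm{quo}({\sf y}_{k-1})$; ${\sf z}_k=\min\{{\sf x}_k,{\sf y}'_k\}$; ${\sf X}_k={\sf x}_k-{\sf z}_k+{\sf z}_{k-1}$; $\widetilde{\sf Y}_k={\sf y}'_k-{\sf z}_k+{\sf z}_{k-1}$; $\widetilde{\sf X}_k=\mathrm{rem}({\sf X}_k)+2\,\mathrm{quo}({\sf X}_{k-1})$; and $\mathcal F({\boldsymbol{\mathsf X}})=(\widetilde{\sf X}_k;\widetilde{\sf Y}_k)_{k\in\mathbb Z}$. Signature rule: the signature of ${\boldsymbol{\mathsf X}}$ is the finite sequence $\sigma({\boldsymbol{\mathsf X}})=(\cdots\,-^{{\sf y}_{k+1}}\,+^{{\sf x}_{k+1}}\,-^{{\sf y}_k}\,+^{{\sf x}_k}\,-^{{\sf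 y}_{k-1}}\,+^{{\sf x}_{k-1}}\cdots)$ (read left to right with $k$ decreasing; superscripts are multiplicities). Repeatedly cancel a pair $(+,-)$ in which the $+$ is to the left of the $-$ with only canceled symbols between them, until the reduced signature $\overline\sigma({\boldsymbol{\mathsf X}})$ has the form $(-\cdots-+\cdots+)$. If the leftmost $+$ of $\overline\sigma({\boldsymbol{\mathsf X}})$ comes from $+^{{\sf x}_k}$, then $\tilde f{\boldsymbol{\mathsf X}}={\boldsymbol{\mathsf X}}-{\boldsymbol{\mathsf x}}_k(1)+{\boldsymbol{\mathsf y}}_k(1)$; if $\overline\sigma({\boldsymbol{\mathsf X}})$ has no $+$, then $\tilde f{\boldsymbol{\mathsf X}}=0$. *)

theory Defs
  imports Main
begin

text \<open>A two-rowed array (x_k; y_k)_{k in Z} is represented as a pair of functions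
  int => nat (first row x, second row y); it is an array when its support is finite.\<close>

type_synonym arr = "(int \<Rightarrow> nat) \<times> (int \<Rightarrow> nat)"

definition supp_arr :: "arr \<Rightarrow> int set" where
  "supp_arr X = {k. fst X k \<noteq> 0 \<or> snd X k \<noteq> 0}"

definition is_array :: "arr \<Rightarrow> bool" where
  "is_array X \<longleftrightarrow> finite (supp_arr X)"

definition add_arr :: "arr \<Rightarrow> arr \<Rightarrow> arr" where
  "add_arr X Y = ((\<lambda>k. fst X k + fst Y k), (\<lambda>k. snd X k + snd Y k))"

definition sub_arr :: "arr \<Rightarrow> arr \<Rightarrow> arr" where
  "sub_arr X Y = ((\<lambda>k. fst X k - fst Y k), (\<lambda>k. snd X k - snd Y k))"

definition xa :: "int \<Rightarrow> nat \<Rightarrow> arr" where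
  "xa k a = ((\<lambda>j. if j = k then a else 0), (\<lambda>j. 0))"

definition ya :: "int \<Rightarrow> nat \<Rightarrow> arr" where
  "ya k a = ((\<lambda>j. 0), (\<lambda>j. if j = k then a else 0))"

definition XX :: "int \<Rightarrow> nat \<Rightarrow> arr" where
  "XX k a = add_arr (xa (k + 1) a) (ya k a)"

definition quo :: "nat \<Rightarrow> nat" where "quo z = z div 2"
definition rem :: "nat \<Rightarrow> nat" where "rem z = z mod 2"

definition FF :: "arr \<Rightarrow> arr" where
  "FF X = (let x = fst X; y = snd X;
      y' = (\<lambda>k. rem (y k) + 2 * quo (y (k - 1)));
      z = (\<lambda>k. min (x k) (y' k));
      Xn = (\<lambda>k. x k - z k + z (k - 1));
      Yt = (\<lambda>k. y' k - z k + z (k - 1));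
      Xt = (\<lambda>k. rem (Xn k) + 2 * quo (Xn (k - 1)))
    in (Xt, Yt))"

text \<open>Signature: a list of symbols (True = +, False = -) tagged with the index k
  they come from, read with k decreasing; for each k first y_k minus signs then x_k plus signs.
  Indices outside the support contribute nothing, so we range over [-N..N] with N
  bounding the support.\<close>

definition sig_bound :: "arr \<Rightarrow> int" where
  "sig_bound X = Max (insert 0 (abs ` supp_arr X))"

definition sig :: "arr \<Rightarrow> (bool \<times> int) list" where
  "sig X = concat (map (\<lambda>k. replicate (snd X k) (False, k) @ replicate (fst X k) (True, k))
                        (rev [- sig_bound X .. sig_bound X]))"

text \<open>Reduction by cancelling pairs (+,-) with the + left of the - and only cancelled
  symbols in between (processed from the right; the result has the form - ... - + ... +).\<close>

fun reduce_sig :: "(bool \<times> int) list \<Rightarrow> (bool \<times> int) list" where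
  "reduce_sig [] = []"
| "reduce_sig (s # rest) =
     (let r = reduce_sig rest in
      if fst s \<and> r \<noteq> [] \<and> \<not> fst (hd r) then tl r else s # r)"

text \<open>Kashiwara operator f-tilde; None represents 0.\<close>

definition ftilde :: "arr \<Rightarrow> arr option" where
  "ftilde X = (case find fst (reduce_sig (sig X)) of
      None \<Rightarrow> None
    | Some (_, k) \<Rightarrow> Some (add_arr (sub_arr X (xa k 1)) (ya k 1)))"

end

theory Submission
  imports Defs
begin

lemma part1: "FF (XX k (2 * a)) = XX (k + 2) (2 * a)"
  unfolding FF_def XX_def add_arr_def xa_def ya_def rem_def quo_def Let_def
  by (auto intro!: ext)

lemma part2: "FF (add_arr X (XX k (2 * a))) = add_arr (FF X) (XX (k + 2) (2 * a))"
proof -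
  obtain x y where X: "X = (x, y)" by (cases X)
  define d :: "int \<Rightarrow> int \<Rightarrow> nat" where "d = (\<lambda>m j. if j = m then 2 * a else 0)"
  have Y: "add_arr X (XX k (2 * a)) = ((\<lambda>j. x j + d (k+1) j), (\<lambda>j. y j + d k j))"
    unfolding X d_def add_arr_def XX_def xa_def ya_def by (auto intro!: ext)
  have R: "add_arr (FF X) (XX (k + 2) (2 * a)) = ((\<lambda>j. fst (FF X) j + d (k+3) j), (\<lambda>j. snd (FF X) j + d (k+2) j))"
    unfolding d_def add_arr_def XX_def xa_def ya_def by (auto intro!: ext)
  define y' where "y' = (\<lambda>k. rem (y k) + 2 * quo (y (k - 1)))"
  define z where "z = (\<lambda>k. min (x k) (y' k))"
  define Xn where "Xn = (\<lambda>k. x k - z k + z (k - 1))"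
  define Yt where "Yt = (\<lambda>k. y' k - z k + z (k - 1))"
  define Xt where "Xt = (\<lambda>k. rem (Xn k) + 2 * quo (Xn (k - 1)))"
  have FX: "FF X = (Xt, Yt)" unfolding FF_def X Let_def Xt_def Xn_def Yt_def z_def y'_def by simp
  define y'2 where "y'2 = (\<lambda>j. rem (y j + d k j) + 2 * quo (y (j - 1) + d k (j - 1)))"
  have e1: "y'2 = (\<lambda>j. y' j + d (k+1) j)"
    unfolding y'2_def y'_def d_def rem_def quo_def by (auto intro!: ext)
  define z2 where "z2 = (\<lambda>j. min (x j + d (k+1) j) (y'2 j))"
  have e2: "z2 = (\<lambda>j. z j + d (k+1) j)"
    unfolding z2_def e1 z_def by (auto intro!: ext)
  define Xn2 where "Xn2 = (\<lambda>j. x j + d (k+1) j - z2 j + z2 (j - 1))"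
  have zx: "z j \<le> x j" for j unfolding z_def by simp
  have zy: "z j \<le> y' j" for j unfolding z_def by simp
  have e3: "Xn2 = (\<lambda>j. Xn j + d (k+2) j)"
    unfolding Xn2_def e2 Xn_def d_def
    by (rule ext) (use zx[of "k+2"] in \<open>auto\<close>)
  define Yt2 where "Yt2 = (\<lambda>j. y'2 j - z2 j + z2 (j - 1))"
  have e4: "Yt2 = (\<lambda>j. Yt j + d (k+2) j)"
    unfolding Yt2_def e2 e1 Yt_def d_def
    by (rule ext) (use zy[of "k+2"] zy[of "k+1"] in \<open>auto\<close>)
  define Xt2 where "Xt2 = (\<lambda>j. rem (Xn2 j) + 2 * quo (Xn2 (j - 1)))"
  have e5: "Xt2 = (\<lambda>j. Xt j + d (k+3) j)"
    unfolding Xt2_def e3 Xt_def d_def rem_def quo_def by (auto intro!: ext)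
  have "FF (add_arr X (XX k (2 * a))) = (Xt2, Yt2)"
    unfolding Y FF_def Let_def Xt2_def Xn2_def Yt2_def z2_def y'2_def by simp
  then show ?thesis using R unfolding FX e4 e5 by simp
qed

definition sig_r :: "arr \<Rightarrow> int \<Rightarrow> (bool \<times> int) list" where
  "sig_r X M = concat (map (\<lambda>k. replicate (snd X k) (False, k) @ replicate (fst X k) (True, k))
                        (rev [- M .. M]))"

lemma concat_filter: "concat (map f xs) = concat (map f (filter (\<lambda>k. f k \<noteq> []) xs))"
  by (induction xs) auto

lemma sig_bound_ge: "is_array X \<Longrightarrow> k \<in> supp_arr X \<Longrightarrow> \<bar>k\<bar> \<le> sig_bound X"
  unfolding sig_bound_def is_array_def
  by (rule Max_ge) simp_all

lemma sig_bound_nonneg: "is_array X \<Longrightarrow> 0 \<le> sig_bound X"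
  unfolding sig_bound_def is_array_def
  by (rule Max_ge) simp_all

lemma sig_r_eq: assumes "is_array X" "sig_bound X \<le> M" shows "sig_r X M = sig X"
proof -
  let ?f = "(\<lambda>k. replicate (snd X k) (False, k) @ replicate (fst X k) (True, k))"
  let ?P = "(\<lambda>k. ?f k \<noteq> [])"
  let ?N = "sig_bound X"
  have P: "?P k \<Longrightarrow> \<bar>k\<bar> \<le> ?N" for k
    using sig_bound_ge[OF assms(1), of k] by (auto simp: supp_arr_def)
  have "filter ?P [-M..M] = filter ?P [-?N..?N]"
  proof (rule sorted_distinct_set_unique)
    show "sorted (filter ?P [-M..M])" "sorted (filter ?P [-?N..?N])"
      by (simp_all add: sorted_wrt_filter del: sorted_filter)
    show "distinct (filter ?P [-M..M])" "distinct (filter ?P [-?N..?N])" by simp_all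
    show "set (filter ?P [-M..M]) = set (filter ?P [-?N..?N])"
    proof
      show "set (filter ?P [-M..M]) \<subseteq> set (filter ?P [-?N..?N])"
      proof
        fix x assume "x \<in> set (filter ?P [-M..M])"
        then have "?P x" by simp
        then have "\<bar>x\<bar> \<le> ?N" by (rule P)
        with \<open>?P x\<close> show "x \<in> set (filter ?P [-?N..?N])" by (simp add: abs_le_iff)
      qed
      show "set (filter ?P [-?N..?N]) \<subseteq> set (filter ?P [-M..M])"
        using assms(2) by auto
    qed
  qed
  then have F: "filter ?P (rev [-M..M]) = filter ?P (rev [-?N..?N])"
    by (simp only: rev_filter[symmetric])
  have "sig_r X M = concat (map ?f (rev [-M..M]))" unfolding sig_r_def ..
  also have "\<dots> = concat (map ?f (filter ?P (rev [-M..M])))" by (rule concat_filter)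
  also have "\<dots> = concat (map ?f (filter ?P (rev [-?N..?N])))" by (simp only: F)
  also have "\<dots> = concat (map ?f (rev [-?N..?N]))" by (rule concat_filter[symmetric])
  also have "\<dots> = sig X" unfolding sig_def ..
  finally show ?thesis .
qed

lemma reduce_pm: "fst p \<Longrightarrow> \<not> fst m \<Longrightarrow> reduce_sig (u @ p # m # v) = reduce_sig (u @ v)"
  by (induction u) (auto simp: Let_def)

lemma reduce_pmn: "fst p \<Longrightarrow> \<not> fst m \<Longrightarrow>
   reduce_sig (u @ replicate n p @ replicate n m @ v) = reduce_sig (u @ v)"
proof (induction n arbitrary: v)
  case 0 then show ?case by simp
next
  case (Suc n)
  have "u @ replicate (Suc n) p @ replicate (Suc n) m @ v
      = (u @ replicate n p) @ p # m # (replicate n m @ v)"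
    by (simp add: replicate_append_same[symmetric])
  then show ?case using Suc reduce_pm[of p m "u @ replicate n p" "replicate n m @ v"] by simp
qed

lemma reduce_subset: "set (reduce_sig xs) \<subseteq> set xs"
proof (induction xs)
  case (Cons s rest)
  then show ?case by (auto simp: Let_def dest: list.set_sel(2))
qed simp

lemma sig_plus: "x \<in> set (sig X) \<Longrightarrow> fst x \<Longrightarrow> fst X (snd x) \<noteq> 0"
  unfolding sig_def by auto

lemma supp_add: "supp_arr (add_arr X (XX k b)) \<subseteq> supp_arr X \<union> {k, k+1}"
  unfolding supp_arr_def add_arr_def XX_def xa_def ya_def by auto

lemma part3:
  assumes "is_array X"
  shows "ftilde (add_arr X (XX k (2 * a))) = map_option (\<lambda>Y. add_arr Y (XX k (2 * a))) (ftilde X)"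
proof -
  let ?Y = "add_arr X (XX k (2 * a))"
  have arrY: "is_array ?Y"
    unfolding is_array_def
  proof (rule finite_subset[OF supp_add])
    show "finite (supp_arr X \<union> {k, k + 1})" using assms unfolding is_array_def by simp
  qed
  have b0: "0 \<le> sig_bound X" "0 \<le> sig_bound ?Y"
    using sig_bound_nonneg assms arrY by auto
  define M where "M = max (sig_bound X) (sig_bound ?Y) + \<bar>k\<bar> + 1"
  have sX: "sig X = sig_r X M" by (rule sig_r_eq[OF assms, symmetric]) (use M_def b0 in simp)
  have sY: "sig ?Y = sig_r ?Y M" by (rule sig_r_eq[OF arrY, symmetric]) (use M_def b0 in simp)
  have split: "rev [-M..M] = rev [k+2..M] @ [k+1, k] @ rev [-M..k-1]"
  proof -
    have "[-M..M] = [-M..k-1] @ k # [k+1..M]" using M_def b0 by (intro upto_split3) auto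
    moreover have "[k+1..M] = (k+1) # [k+1+1..M]" using M_def b0 by (intro upto_rec1) auto
    moreover have "k + 1 + 1 = k + 2" by simp
    ultimately show ?thesis by (simp only: rev_append rev.simps append.simps append_assoc)
  qed
  let ?f = "(\<lambda>j. replicate (snd X j) (False, j) @ replicate (fst X j) (True, j))"
  let ?g = "(\<lambda>j. replicate (snd ?Y j) (False, j) @ replicate (fst ?Y j) (True, j))"
  have eqA: "map ?g (rev [k+2..M]) = map ?f (rev [k+2..M])"
    by (auto simp: add_arr_def XX_def xa_def ya_def)
  have eqB: "map ?g (rev [-M..k-1]) = map ?f (rev [-M..k-1])"
    by (auto simp: add_arr_def XX_def xa_def ya_def)
  have g1: "?g (k+1) = ?f (k+1) @ replicate (2*a) (True, k+1)"
    by (simp add: add_arr_def XX_def xa_def ya_def replicate_add)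
  have g0: "?g k = replicate (2*a) (False, k) @ ?f k"
  proof -
    have "snd ?Y k = 2*a + snd X k" by (simp add: add_arr_def XX_def xa_def ya_def)
    moreover have "fst ?Y k = fst X k" by (simp add: add_arr_def XX_def xa_def ya_def)
    ultimately show ?thesis by (simp only: replicate_add append_assoc)
  qed
  have "sig ?Y = concat (map ?f (rev [k+2..M])) @ ?f (k+1) @ replicate (2*a) (True, k+1)
      @ replicate (2*a) (False, k) @ ?f k @ concat (map ?f (rev [-M..k-1]))"
  proof -
    have "sig ?Y = concat (map ?g (rev [k+2..M])) @ ?g (k+1) @ ?g k @ concat (map ?g (rev [-M..k-1]))"
      unfolding sY sig_r_def split by simp
    then show ?thesis by (simp only: eqA eqB g1 g0 append_assoc)
  qed
  then have "reduce_sig (sig ?Y) = reduce_sig (concat (map ?f (rev [k+2..M])) @ ?f (k+1) @ ?f k @ concat (map ?f (rev [-M..k-1])))"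
    using reduce_pmn[of "(True, k+1)" "(False, k)" "concat (map ?f (rev [k+2..M])) @ ?f (k+1)"]
    by simp
  also have "\<dots> = reduce_sig (sig X)"
    unfolding sX sig_r_def split by simp
  finally have red: "reduce_sig (sig ?Y) = reduce_sig (sig X)" .
  show ?thesis
  proof (cases "find fst (reduce_sig (sig X))")
    case None
    then show ?thesis unfolding ftilde_def red by simp
  next
    case (Some p)
    obtain b j where p: "p = (b, j)" by (cases p)
    have "p \<in> set (reduce_sig (sig X))" "fst p" using Some by (auto simp: find_Some_iff nth_mem)
    then have "fst X j \<noteq> 0" using reduce_subset sig_plus p by fastforce
    then show ?thesis unfolding ftilde_def red using Some p
      by (auto intro!: ext simp: add_arr_def sub_arr_def XX_def xa_def ya_def)
  qed
qed

theorem mainTheorem6: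
  fixes X :: arr and k :: int and a :: nat
  assumes "is_array X"
  shows "FF (XX k (2 * a)) = XX (k + 2) (2 * a)
    \<and> FF (add_arr X (XX k (2 * a))) = add_arr (FF X) (XX (k + 2) (2 * a))
    \<and> ftilde (add_arr X (XX k (2 * a))) = map_option (\<lambda>Y. add_arr Y (XX k (2 * a))) (ftilde X)"
  by (intro conjI part1 part2 part3[OF assms])

end
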